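(* Let $\langle A;\cdot\rangle$ be a groupoid with an identity element which is an Abelian algebra. Then $\langle A;\cdot\rangle$ is a Hamiltonian algebra if and only if $\langle A;\cdot\rangle$ is a periodic commutative group (every element has finite order).
   Context: A groupoid is an algebra $\langle A;\cdot\rangle$ with one binary operation (its subalgebras are the nonempty subsets closed under $\cdot$); an identity element is $1\in A$ with $1\cdot a=a\cdot 1=a$ for all $a$. A polynomial operation of an algebra is an operation obtained from a term by substituting elements of the algebra for some of its variables. An algebra is called Abelian if for every polynomial operation $t(x,y_1,\ldots,y_n)$ and all elements $u,v,c_1,\ldots,c_n,d_1,\ldots,d_n$ of the algebra, $t(u,c_1,\ldots,c_n)=t(u,d_1,\ldots,d_n)$ implies $t(v,c_1,\ldots,c_n)=t(v,d_1,\ldots,d_n)$. An algebra is called Hamiltonian if the universe of every subalgebra is an equivalence class (block) of some congruence of the algebra. *)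

theory Defs
  imports "HOL-Algebra.Group"
begin

text \<open>A groupoid is represented by its operation m on the type 'a, whose universe
  (UNIV) is the universe of the algebra.\<close>

text \<open>Terms with constants (polynomials): X is the distinguished variable x,
  Y i are the parameter variables y_i, C a is a constant a.\<close>
datatype 'a pterm = X | Y nat | C 'a | Mul "'a pterm" "'a pterm"

primrec peval :: "('a \<Rightarrow> 'a \<Rightarrow> 'a) \<Rightarrow> 'a \<Rightarrow> (nat \<Rightarrow> 'a) \<Rightarrow> 'a pterm \<Rightarrow> 'a" where
  "peval m x ys X = x"
| "peval m x ys (Y i) = ys i"
| "peval m x ys (C a) = a"
| "peval m x ys (Mul s t) = m (peval m x ys s) (peval m x ys t)"

definition has_identity :: "('a \<Rightarrow> 'a \<Rightarrow> 'a) \<Rightarrow> bool" where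
  "has_identity m \<longleftrightarrow> (\<exists>e. \<forall>a. m e a = a \<and> m a e = a)"

definition abelian_alg :: "('a \<Rightarrow> 'a \<Rightarrow> 'a) \<Rightarrow> bool" where
  "abelian_alg m \<longleftrightarrow> (\<forall>t u v (c :: nat \<Rightarrow> 'a) d.
      peval m u c t = peval m u d t \<longrightarrow> peval m v c t = peval m v d t)"

definition subalgebra :: "('a \<Rightarrow> 'a \<Rightarrow> 'a) \<Rightarrow> 'a set \<Rightarrow> bool" where
  "subalgebra m S \<longleftrightarrow> S \<noteq> {} \<and> (\<forall>a\<in>S. \<forall>b\<in>S. m a b \<in> S)"

definition congruence_rel :: "('a \<Rightarrow> 'a \<Rightarrow> 'a) \<Rightarrow> ('a \<times> 'a) set \<Rightarrow> bool" where
  "congruence_rel m \<theta> \<longleftrightarrow> equiv UNIV \<theta> \<and>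
     (\<forall>a b c d. (a, b) \<in> \<theta> \<and> (c, d) \<in> \<theta> \<longrightarrow> (m a c, m b d) \<in> \<theta>)"

definition hamiltonian :: "('a \<Rightarrow> 'a \<Rightarrow> 'a) \<Rightarrow> bool" where
  "hamiltonian m \<longleftrightarrow> (\<forall>S. subalgebra m S \<longrightarrow>
      (\<exists>\<theta> a. congruence_rel m \<theta> \<and> S = \<theta> `` {a}))"

definition periodic_comm_group :: "('a \<Rightarrow> 'a \<Rightarrow> 'a) \<Rightarrow> bool" where
  "periodic_comm_group m \<longleftrightarrow> (\<exists>e. comm_group \<lparr>carrier = UNIV, mult = m, one = e\<rparr> \<and>
      (\<forall>a. \<exists>n::nat. n > 0 \<and> a [^]\<^bsub>\<lparr>carrier = UNIV, mult = m, one = e\<rparr>\<^esub> n = e))"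

end

theory Submission
  imports Defs
begin

lemma ab_comm:
  assumes ab: "abelian_alg m" and e: "\<forall>a. m e a = a \<and> m a e = a"
  shows "m a v = m v a"
proof -
  let ?t = "Mul (Mul (Y 0) X) (Y 1)"
  let ?c = "\<lambda>i::nat. if i = 0 then a else e"
  let ?d = "\<lambda>i::nat. if i = 0 then e else a"
  have "peval m e ?c ?t = peval m e ?d ?t" using e by simp
  with ab have "peval m v ?c ?t = peval m v ?d ?t" unfolding abelian_alg_def by blast
  thus ?thesis using e by simp
qed

lemma ab_swap:
  assumes ab: "abelian_alg m" and e: "\<forall>a. m e a = a \<and> m a e = a"
  shows "m (m a v) b = m (m a b) v"
proof -
  let ?t = "Mul (Mul (Y 0) X) (Y 1)"
  let ?c = "\<lambda>i::nat. if i = 0 then a else b"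
  let ?d = "\<lambda>i::nat. if i = 0 then m a b else e"
  have "peval m e ?c ?t = peval m e ?d ?t" using e by simp
  with ab have "peval m v ?c ?t = peval m v ?d ?t" unfolding abelian_alg_def by blast
  thus ?thesis using e by simp
qed

lemma ab_cancel:
  assumes ab: "abelian_alg m" and e: "\<forall>a. m e a = a \<and> m a e = a"
    and h: "m x y = m x z"
  shows "y = z"
proof -
  let ?t = "Mul X (Y 0)"
  have "peval m x (\<lambda>_. y) ?t = peval m x (\<lambda>_. z) ?t" using h by simp
  with ab have "peval m e (\<lambda>_. y) ?t = peval m e (\<lambda>_. z) ?t" unfolding abelian_alg_def by blast
  thus ?thesis using e by simp
qed

lemma ab_cmonoid:
  assumes ab: "abelian_alg m" and e: "\<forall>a. m e a = a \<and> m a e = a"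
  shows "comm_monoid \<lparr>carrier = UNIV, mult = m, one = e\<rparr>"
proof (rule comm_monoidI, simp_all)
  fix x y z
  have "m (m x y) z = m (m y x) z" using ab_comm[OF ab e] by simp
  also have "\<dots> = m (m y z) x" using ab_swap[OF ab e] by simp
  also have "\<dots> = m x (m y z)" using ab_comm[OF ab e] by simp
  finally show "m (m x y) z = m x (m y z)" .
  show "m e x = x" using e by simp
  show "m x y = m y x" using ab_comm[OF ab e] by simp
qed

lemma pow_cancel:
  assumes ab: "abelian_alg m" and e: "\<forall>a. m e a = a \<and> m a e = a"
    and pq: "(p::nat) < q" and eq: "a [^]\<^bsub>\<lparr>carrier = UNIV, mult = m, one = e\<rparr>\<^esub> p = a [^]\<^bsub>\<lparr>carrier = UNIV, mult = m, one = e\<rparr>\<^esub> q"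
  shows "a [^]\<^bsub>\<lparr>carrier = UNIV, mult = m, one = e\<rparr>\<^esub> (q - p) = e"
proof -
  let ?G = "\<lparr>carrier = UNIV, mult = m, one = e\<rparr>"
  interpret comm_monoid ?G by (rule ab_cmonoid[OF ab e])
  have "a [^]\<^bsub>?G\<^esub> q = m (a [^]\<^bsub>?G\<^esub> p) (a [^]\<^bsub>?G\<^esub> (q - p))"
    using nat_pow_mult[of a p "q - p"] pq by simp
  moreover have "a [^]\<^bsub>?G\<^esub> p = m (a [^]\<^bsub>?G\<^esub> p) e" using e by simp
  ultimately have "m (a [^]\<^bsub>?G\<^esub> p) (a [^]\<^bsub>?G\<^esub> (q - p)) = m (a [^]\<^bsub>?G\<^esub> p) e"
    using eq by simp
  thus ?thesis by (rule ab_cancel[OF ab e])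
qed

lemma ham_periodic:
  assumes ab: "abelian_alg m" and e: "\<forall>a. m e a = a \<and> m a e = a"
    and ham: "hamiltonian m"
  shows "\<exists>n::nat. n > 0 \<and> a [^]\<^bsub>\<lparr>carrier = UNIV, mult = m, one = e\<rparr>\<^esub> n = e"
proof -
  let ?G = "\<lparr>carrier = UNIV, mult = m, one = e\<rparr>"
  interpret comm_monoid ?G by (rule ab_cmonoid[OF ab e])
  define S where "S = {a [^]\<^bsub>?G\<^esub> n | n. n \<ge> 2 \<and> n \<noteq> (3::nat)}"
  have sub: "subalgebra m S"
    unfolding subalgebra_def S_def
  proof (intro conjI ballI)
    show "{a [^]\<^bsub>?G\<^esub> n | n. n \<ge> 2 \<and> n \<noteq> (3::nat)} \<noteq> {}" by force
  next
    fix x y assume "x \<in> {a [^]\<^bsub>?G\<^esub> n | n. n \<ge> 2 \<and> n \<noteq> (3::nat)}"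
      "y \<in> {a [^]\<^bsub>?G\<^esub> n | n. n \<ge> 2 \<and> n \<noteq> (3::nat)}"
    then obtain p q :: nat where "x = a [^]\<^bsub>?G\<^esub> p" "y = a [^]\<^bsub>?G\<^esub> q"
      "p \<ge> 2" "p \<noteq> 3" "q \<ge> 2" "q \<noteq> 3" by blast
    moreover have "m (a [^]\<^bsub>?G\<^esub> p) (a [^]\<^bsub>?G\<^esub> q) = a [^]\<^bsub>?G\<^esub> (p + q)"
      using nat_pow_mult[of a p q] by simp
    ultimately show "m x y \<in> {a [^]\<^bsub>?G\<^esub> n | n. n \<ge> 2 \<and> n \<noteq> (3::nat)}"
      by (intro CollectI exI[of _ "p + q"]) auto
  qed
  then obtain \<theta> c where cg: "congruence_rel m \<theta>" and Sc: "S = \<theta> `` {c}"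
    using ham unfolding hamiltonian_def by blast
  have eqv: "equiv UNIV \<theta>" using cg unfolding congruence_rel_def by blast
  have cmp: "\<And>a b c d. (a, b) \<in> \<theta> \<Longrightarrow> (c, d) \<in> \<theta> \<Longrightarrow> (m a c, m b d) \<in> \<theta>"
    using cg unfolding congruence_rel_def by blast
  have "a [^]\<^bsub>?G\<^esub> (2::nat) \<in> S" "a [^]\<^bsub>?G\<^esub> (4::nat) \<in> S" "a [^]\<^bsub>?G\<^esub> (5::nat) \<in> S"
    unfolding S_def by force+
  hence h: "(c, a [^]\<^bsub>?G\<^esub> (2::nat)) \<in> \<theta>" "(c, a [^]\<^bsub>?G\<^esub> (4::nat)) \<in> \<theta>"
     "(c, a [^]\<^bsub>?G\<^esub> (5::nat)) \<in> \<theta>" using Sc by auto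
  have "(a [^]\<^bsub>?G\<^esub> (2::nat), a [^]\<^bsub>?G\<^esub> (4::nat)) \<in> \<theta>"
    using h eqv by (meson equivE symE transE)
  moreover have "(a, a) \<in> \<theta>" using eqv by (meson equivE refl_onD UNIV_I)
  ultimately have "(m a (a [^]\<^bsub>?G\<^esub> (2::nat)), m a (a [^]\<^bsub>?G\<^esub> (4::nat))) \<in> \<theta>"
    using cmp by blast
  moreover have "m a (a [^]\<^bsub>?G\<^esub> (2::nat)) = a [^]\<^bsub>?G\<^esub> (3::nat)"
    using nat_pow_Suc2[of a 2] by (simp add: numeral_eq_Suc)
  moreover have "m a (a [^]\<^bsub>?G\<^esub> (4::nat)) = a [^]\<^bsub>?G\<^esub> (5::nat)"
    using nat_pow_Suc2[of a 4] by (simp add: numeral_eq_Suc)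
  ultimately have "(a [^]\<^bsub>?G\<^esub> (3::nat), a [^]\<^bsub>?G\<^esub> (5::nat)) \<in> \<theta>" by simp
  hence "(c, a [^]\<^bsub>?G\<^esub> (3::nat)) \<in> \<theta>" using h eqv by (meson equivE symE transE)
  hence "a [^]\<^bsub>?G\<^esub> (3::nat) \<in> S" using Sc by auto
  then obtain n :: nat where n: "a [^]\<^bsub>?G\<^esub> (3::nat) = a [^]\<^bsub>?G\<^esub> n" "n \<ge> 2" "n \<noteq> 3"
    unfolding S_def by blast
  show ?thesis
  proof (cases "n = 2")
    case True
    hence "a [^]\<^bsub>?G\<^esub> (3 - 2::nat) = e"
      using pow_cancel[OF ab e, of 2 3 a] n by simp
    thus ?thesis by (intro exI[of _ "3 - 2"]) simp
  next
    case False
    hence "3 < n" using n by simp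
    hence "a [^]\<^bsub>?G\<^esub> (n - 3) = e"
      using pow_cancel[OF ab e, of 3 n a] n by simp
    thus ?thesis using \<open>3 < n\<close> by (intro exI[of _ "n - 3"]) simp
  qed
qed

lemma dir1:
  assumes ab: "abelian_alg m" and hi: "has_identity m" and ham: "hamiltonian m"
  shows "periodic_comm_group m"
proof -
  obtain e where e: "\<forall>a. m e a = a \<and> m a e = a" using hi unfolding has_identity_def by blast
  let ?G = "\<lparr>carrier = UNIV, mult = m, one = e\<rparr>"
  interpret comm_monoid ?G by (rule ab_cmonoid[OF ab e])
  have per: "\<And>a. \<exists>n::nat. n > 0 \<and> a [^]\<^bsub>?G\<^esub> n = e" by (rule ham_periodic[OF ab e ham])
  have "comm_group ?G"
  proof (rule comm_groupI, simp_all)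
    fix x y z
    show "m (m x y) z = m x (m y z)" using m_assoc[of x y z] by simp
    show "m x y = m y x" using m_comm[of x y] by simp
    show "m e x = x" using e by simp
    obtain n :: nat where n: "n > 0" "x [^]\<^bsub>?G\<^esub> n = e" using per by blast
    have "m (x [^]\<^bsub>?G\<^esub> (n - 1)) x = x [^]\<^bsub>?G\<^esub> (Suc (n - 1))" by simp
    also have "\<dots> = e" using n by simp
    finally show "\<exists>y. m y x = e" by blast
  qed
  thus ?thesis unfolding periodic_comm_group_def using per by blast
qed

lemma dir2:
  assumes pg: "periodic_comm_group m"
  shows "hamiltonian m"
  unfolding hamiltonian_def
proof (intro allI impI)
  fix S assume sub: "subalgebra m S"
  obtain e where cg: "comm_group \<lparr>carrier = UNIV, mult = m, one = e\<rparr>"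
    and per: "\<forall>a. \<exists>n::nat. n > 0 \<and> a [^]\<^bsub>\<lparr>carrier = UNIV, mult = m, one = e\<rparr>\<^esub> n = e"
    using pg unfolding periodic_comm_group_def by blast
  let ?G = "\<lparr>carrier = UNIV, mult = m, one = e\<rparr>"
  interpret comm_group ?G by (rule cg)
  have ne: "S \<noteq> {}" and cl: "\<And>a b. a \<in> S \<Longrightarrow> b \<in> S \<Longrightarrow> m a b \<in> S"
    using sub unfolding subalgebra_def by auto
  have powS: "a [^]\<^bsub>?G\<^esub> Suc k \<in> S" if "a \<in> S" for a k
    using that by (induct k) (auto intro: cl simp: l_one[simplified])
  have eS: "e \<in> S"
  proof -
    obtain a where a: "a \<in> S" using ne by blast
    obtain n :: nat where "n > 0" "a [^]\<^bsub>?G\<^esub> n = e" using per by blast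
    thus ?thesis using powS[OF a, of "n - 1"] by simp
  qed
  have powS': "a [^]\<^bsub>?G\<^esub> k \<in> S" if "a \<in> S" for a and k :: nat
    using that eS powS by (cases k) auto
  have invS: "inv\<^bsub>?G\<^esub> a \<in> S" if "a \<in> S" for a
  proof -
    obtain n :: nat where n: "n > 0" "a [^]\<^bsub>?G\<^esub> n = e" using per by blast
    have "m (a [^]\<^bsub>?G\<^esub> (n - 1)) a = a [^]\<^bsub>?G\<^esub> (Suc (n - 1))" by simp
    also have "\<dots> = e" using n by simp
    finally have "inv\<^bsub>?G\<^esub> a = a [^]\<^bsub>?G\<^esub> (n - 1)"
      using inv_equality[of "a [^]\<^bsub>?G\<^esub> (n - 1)" a] by simp
    thus ?thesis using powS'[OF that] by simp
  qed
  define \<theta> where "\<theta> = {(x, y). m x (inv\<^bsub>?G\<^esub> y) \<in> S}"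
  have "congruence_rel m \<theta>"
    unfolding congruence_rel_def
  proof (intro conjI allI impI)
    show "equiv UNIV \<theta>"
    proof (rule equivI)
      show "refl \<theta>" unfolding refl_on_def \<theta>_def using eS r_inv[of _] by simp
      show "sym \<theta>" unfolding sym_def \<theta>_def
      proof (clarsimp)
        fix x y assume "m x (inv\<^bsub>?G\<^esub> y) \<in> S"
        hence "inv\<^bsub>?G\<^esub> (m x (inv\<^bsub>?G\<^esub> y)) \<in> S" by (rule invS)
        thus "m y (inv\<^bsub>?G\<^esub> x) \<in> S" using inv_mult[of x "inv\<^bsub>?G\<^esub> y"] m_comm[of y "inv\<^bsub>?G\<^esub> x"] by simp
      qed
      show "trans \<theta>" unfolding trans_def \<theta>_def
      proof (clarsimp)
        fix x y z assume "m x (inv\<^bsub>?G\<^esub> y) \<in> S" "m y (inv\<^bsub>?G\<^esub> z) \<in> S"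
        hence "m (m x (inv\<^bsub>?G\<^esub> y)) (m y (inv\<^bsub>?G\<^esub> z)) \<in> S" by (rule cl)
        moreover have "m (m x (inv\<^bsub>?G\<^esub> y)) (m y (inv\<^bsub>?G\<^esub> z)) = m x (inv\<^bsub>?G\<^esub> z)"
          using m_assoc l_inv r_one by (metis UNIV_I partial_object.select_convs(1) monoid.select_convs(1) monoid.select_convs(2))
        ultimately show "m x (inv\<^bsub>?G\<^esub> z) \<in> S" by simp
      qed
      show "\<theta> \<subseteq> UNIV \<times> UNIV" by simp
    qed
  next
    fix a b c d assume "(a, b) \<in> \<theta> \<and> (c, d) \<in> \<theta>"
    hence "m (m a (inv\<^bsub>?G\<^esub> b)) (m c (inv\<^bsub>?G\<^esub> d)) \<in> S" unfolding \<theta>_def by (auto intro: cl)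
    moreover have "m (m a (inv\<^bsub>?G\<^esub> b)) (m c (inv\<^bsub>?G\<^esub> d)) = m (m a c) (inv\<^bsub>?G\<^esub> (m b d))"
      using m_assoc m_comm inv_mult[of b d] by (metis UNIV_I partial_object.select_convs(1) monoid.select_convs(1))
    ultimately show "(m a c, m b d) \<in> \<theta>" unfolding \<theta>_def by simp
  qed
  moreover have "S = \<theta> `` {e}"
  proof -
    have "\<And>y. (e, y) \<in> \<theta> \<longleftrightarrow> y \<in> S"
    proof -
      fix y
      have "(e, y) \<in> \<theta> \<longleftrightarrow> inv\<^bsub>?G\<^esub> y \<in> S" unfolding \<theta>_def using l_one[of "inv\<^bsub>?G\<^esub> y"] by simp
      also have "\<dots> \<longleftrightarrow> y \<in> S" using invS[of y] invS[of "inv\<^bsub>?G\<^esub> y"] by auto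
      finally show "(e, y) \<in> \<theta> \<longleftrightarrow> y \<in> S" .
    qed
    thus ?thesis by auto
  qed
  ultimately show "\<exists>\<theta> a. congruence_rel m \<theta> \<and> S = \<theta> `` {a}" by blast
qed

theorem mainTheorem5:
  fixes m :: "'a \<Rightarrow> 'a \<Rightarrow> 'a"
  assumes "has_identity m" and "abelian_alg m"
  shows "hamiltonian m \<longleftrightarrow> periodic_comm_group m"
  using dir1[OF assms(2) assms(1)] dir2 by blast

end
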